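(* Let $S$ be a numerical semigroup with conductor $c$, enumerated as $S=\{0=\rho_1<\rho_2<\cdots\}$, and let $m\ge 2c-1$. Let $M=\{m_1<\cdots<m_r\}\subseteq S$ be an $(S,m,r)$-amenable set. Then (a) $m_i\le m+\rho_i$ for all $i\in\{1,\ldots,r\}$, and (b) $m_{i+1}-m_i\le\rho_2$ for all $i\in\{1,\ldots,r-1\}$.
   Context: A numerical semigroup is a submonoid of $\mathbb N$ with finite complement; its conductor $c$ is the least element of $S$ such that $c+n\in S$ for all $n\in\mathbb N$. For $x\in S$, $\mathrm D(x)=\{\alpha\in S\mid x-\alpha\in S\}$. A set $M=\{m_1<\cdots<m_r\}\subseteq S$ with $2c-1\le m=m_1$ is $(S,m,r)$-amenable if $\mathrm D(m_i)\cap[m,\infty)\subseteq M$ for all $i\in\{1,\ldots,r\}$. *)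

theory Defs
  imports Main "HOL-Library.Infinite_Set"
begin

definition numerical_semigroup :: "nat set \<Rightarrow> bool" where
  "numerical_semigroup S \<longleftrightarrow> 0 \<in> S \<and> (\<forall>a\<in>S. \<forall>b\<in>S. a + b \<in> S) \<and> finite (UNIV - S)"

definition conductor :: "nat set \<Rightarrow> nat" where
  "conductor S = (LEAST c. c \<in> S \<and> (\<forall>n. c + n \<in> S))"

text \<open>D(x) = {alpha in S | x - alpha in S}; subtraction is taken in the integers, hence alpha <= x.\<close>
definition Dset :: "nat set \<Rightarrow> nat \<Rightarrow> nat set" where
  "Dset S x = {\<alpha> \<in> S. \<alpha> \<le> x \<and> x - \<alpha> \<in> S}"

definition rho :: "nat set \<Rightarrow> nat \<Rightarrow> nat" where
  "rho S i = enumerate S (i - 1)"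

definition melem :: "nat set \<Rightarrow> nat \<Rightarrow> nat" where
  "melem M i = sorted_list_of_set M ! (i - 1)"

text \<open>(S,m,r)-amenable: M = {m_1 < ... < m_r} subset of S, with 2c-1 <= m = m_1
  (2c-1 <= m written as 2c <= m+1 to avoid truncated subtraction).\<close>
definition amenable :: "nat set \<Rightarrow> nat \<Rightarrow> nat \<Rightarrow> nat set \<Rightarrow> bool" where
  "amenable S m r M \<longleftrightarrow> M \<subseteq> S \<and> finite M \<and> card M = r \<and> M \<noteq> {} \<and> Min M = m
     \<and> 2 * conductor S \<le> m + 1
     \<and> (\<forall>x\<in>M. Dset S x \<inter> {m..} \<subseteq> M)"

end

theory Submission
  imports Defs
begin

lemma cond_prop:
  assumes "numerical_semigroup S"
  shows "\<forall>n. conductor S + n \<in> S"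
proof -
  have "finite (UNIV - S)" using assms unfolding numerical_semigroup_def by blast
  then obtain B where B: "\<forall>n\<in>UNIV - S. n \<le> B" using finite_nat_set_iff_bounded_le by blast
  have ex: "\<exists>c. c \<in> S \<and> (\<forall>n. c + n \<in> S)"
    by (rule exI[of _ "Suc B"]) (use B in force)
  show ?thesis using LeastI_ex[OF ex] unfolding conductor_def by blast
qed

lemma inf_S:
  assumes "numerical_semigroup S"
  shows "infinite S"
proof
  assume "finite S"
  moreover have "finite (UNIV - S)" using assms unfolding numerical_semigroup_def by blast
  ultimately have "finite (S \<union> (UNIV - S))" by blast
  thus False by simp
qed

lemma closure:
  assumes ns: "numerical_semigroup S" and c: "2 * conductor S \<le> m + 1"
    and am: "amenable S m r M" and x: "x \<in> M" and a: "\<alpha> \<in> S" and le: "\<alpha> + m \<le> x"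
  shows "x - \<alpha> \<in> M"
proof -
  have "conductor S \<le> m" using c by linarith
  have "x - \<alpha> \<in> S"
  proof -
    have "x - \<alpha> = conductor S + (x - \<alpha> - conductor S)" using le \<open>conductor S \<le> m\<close> by linarith
    thus ?thesis using cond_prop[OF ns] by metis
  qed
  hence "x - \<alpha> \<in> Dset S x \<inter> {m..}" using a le unfolding Dset_def by auto
  thus ?thesis using am x unfolding amenable_def by blast
qed

theorem proposition3p8:
  fixes S M :: "nat set" and m r :: nat
  assumes "numerical_semigroup S"
    and "2 * conductor S \<le> m + 1"
    and "amenable S m r M"
  shows "(\<forall>i\<in>{1..r}. melem M i \<le> m + rho S i)
       \<and> (\<forall>i\<in>{1..r-1}. melem M (i + 1) - melem M i \<le> rho S 2)"
proof -
  note ns = assms(1) and c = assms(2) and am = assms(3)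
  define L where "L = sorted_list_of_set M"
  have fin: "finite M" and cardM: "card M = r" and ne: "M \<noteq> {}" and mn: "Min M = m"
    using am unfolding amenable_def by auto
  have setL: "set L = M" using fin L_def by simp
  have lenL: "length L = r" using cardM L_def by simp
  have ss: "sorted_wrt (<) L" using L_def by simp
  have inf: "infinite S" using inf_S[OF ns] .
  have mM: "m \<in> M" using mn fin ne Min_in by blast
  have mle: "\<And>y. y \<in> M \<Longrightarrow> m \<le> y" using mn fin by auto
  have mono: "\<And>k l. k < r \<Longrightarrow> l < r \<Longrightarrow> L!k < L!l \<longleftrightarrow> k < l"
    by (metis lenL linorder_neqE_nat order_less_asym ss sorted_wrt_nth_less)
  have inM: "\<And>k. k < r \<Longrightarrow> L!k \<in> M" using setL lenL nth_mem by blast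
  have idx: "\<And>y. y \<in> M \<Longrightarrow> \<exists>k<r. y = L!k" using setL lenL by (metis in_set_conv_nth)
  have partA: "\<forall>i\<in>{1..r}. melem M i \<le> m + rho S i"
  proof
    fix i assume i: "i \<in> {1..r}"
    define x where "x = L!(i-1)"
    have xM: "x \<in> M" unfolding x_def by (rule inM) (use i in auto)
    show "melem M i \<le> m + rho S i"
    proof (rule ccontr)
      assume "\<not> ?thesis"
      hence gt: "m + enumerate S (i-1) < x" unfolding melem_def rho_def x_def L_def by simp
      define A where "A = insert m ((\<lambda>k. x - enumerate S k) ` {..<i})"
      have ek: "\<And>k. k < i \<Longrightarrow> enumerate S k \<le> enumerate S (i-1)"
        by (metis Suc_pred' i atLeastAtMost_iff less_Suc_eq_le le_eq_less_or_eq enumerate_mono inf not_less_eq_eq less_numeral_extra(3) neq0_conv order.strict_iff_order)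
      have injk: "inj_on (\<lambda>k. x - enumerate S k) {..<i}"
      proof (rule inj_onI)
        fix a b assume a: "a \<in> {..<i}" and b: "b \<in> {..<i}" and eq: "x - enumerate S a = x - enumerate S b"
        have "enumerate S a = enumerate S b" using eq ek[of a] ek[of b] a b gt by auto
        thus "a = b" by (metis enumerate_mono inf linorder_neqE_nat less_irrefl)
      qed
      have mnot: "m \<notin> (\<lambda>k. x - enumerate S k) ` {..<i}" using ek gt by fastforce
      have cardA: "card A = i + 1" unfolding A_def using mnot injk
        by (simp add: card_image)
      have sub: "A \<subseteq> {y\<in>M. y \<le> x}"
      proof
        fix y assume "y \<in> A"
        then consider "y = m" | k where "k < i" "y = x - enumerate S k" unfolding A_def by auto
        thus "y \<in> {y\<in>M. y \<le> x}"
        proof cases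
          case 1 thus ?thesis using mM gt by simp
        next
          case 2
          have "x - enumerate S k \<in> M"
            using closure[OF ns c am xM enumerate_in_set[OF inf]] ek[OF 2(1)] gt by simp
          thus ?thesis using 2 by simp
        qed
      qed
      have sub2: "{y\<in>M. y \<le> x} \<subseteq> (\<lambda>k. L!k) ` {..<i}"
      proof
        fix y assume y: "y \<in> {y\<in>M. y \<le> x}"
        then obtain k where k: "k < r" "y = L!k" using idx by blast
        have "\<not> (i - 1 < k)" using mono[of "i-1" k] k y i x_def by auto
        thus "y \<in> (\<lambda>k. L!k) ` {..<i}" using k i by auto
      qed
      have "card A \<le> card ((\<lambda>k. L!k) ` {..<i})"
        using card_mono[OF _ order.trans[OF sub sub2]] by simp
      also have "\<dots> \<le> i" using card_image_le[of "{..<i}"] by simp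
      finally show False using cardA by simp
    qed
  qed
  have partB: "\<forall>i\<in>{1..r-1}. melem M (i + 1) - melem M i \<le> rho S 2"
  proof
    fix i assume i: "i \<in> {1..r-1}"
    define x where "x = L!i"
    define y where "y = L!(i-1)"
    have xM: "x \<in> M" unfolding x_def by (rule inM) (use i in auto)
    have yM: "y \<in> M" unfolding y_def by (rule inM) (use i in auto)
    have e1: "enumerate S 1 \<in> S" using enumerate_in_set[OF inf] .
    have "x - y \<le> enumerate S 1"
    proof (cases "enumerate S 1 + m \<le> x")
      case True
      have zM: "x - enumerate S 1 \<in> M" using closure[OF ns c am xM e1 True] .
      have "0 < enumerate S 1" by (metis enumerate_mono inf gr_zeroI less_nat_zero_code zero_less_one)
      then obtain k where k: "k < r" "x - enumerate S 1 = L!k" using idx zM by blast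
      have "L!k < L!i" using k True \<open>0 < enumerate S 1\<close> x_def by linarith
      hence "k < i" using mono[of k i] k i by auto
      moreover have "i - 1 < r" using i by auto
      ultimately have "L!k \<le> y"
      proof -
        assume a: "k < i" "i - 1 < r"
        show ?thesis
        proof (rule ccontr)
          assume "\<not> L!k \<le> y"
          hence "L!(i-1) < L!k" using y_def by simp
          hence "i - 1 < k" using mono[of "i-1" k] a k by blast
          thus False using a by linarith
        qed
      qed
      thus ?thesis using k by linarith
    next
      case False
      thus ?thesis using mle[OF yM] by linarith
    qed
    thus "melem M (i + 1) - melem M i \<le> rho S 2"
      unfolding melem_def rho_def x_def y_def L_def by simp
  qed
  show ?thesis using partA partB by blast
qed

end
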